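(* Let $J\subseteq S$ and let $u,v\in\mathfrak{S}_n^J$ with $u\lessdot_S v$ (a cover relation in weak order). The following are equivalent: (i) there are indices $i<j<k$, each in different $J$-regions, such that $v_k<v_i<v_j$, $v_i=v_k+1$, and $\mathrm{inv}(v)\setminus\mathrm{inv}(u)=\{(i,k)\}$; (ii) $\Pi_\downarrow^J(u)=\Pi_\downarrow^J(v)$; (iii) $\Pi_\uparrow^J(u)=\Pi_\uparrow^J(v)$.
   Context: $\mathfrak{S}_n$ is the symmetric group on $[n]$, $s_i=(i,i+1)$, $S=\{s_1,\dots,s_{n-1}\}$, one-line notation $w=w_1\cdots w_n$, $\mathrm{inv}(w)=\{(i,j):i<j,\ w_i>w_j\}$, weak order $u\le_S v\iff\mathrm{inv}(u)\subseteq\mathrm{inv}(v)$; $u\lessdot_S v$ means $\mathrm{inv}(v)\setminus\mathrm{inv}(u)=\{(i,j)\}$ for a single pair with $v_i=v_j+1$ and $\mathrm{inv}(u)\subseteq\mathrm{inv}(v)$. For $J\subseteq S$, $\mathfrak{S}_n^J$ is the set of $w$ with $w_i<w_{i+1}$ whenever $s_i\in J$. Writing $J=S\setminus\{s_{j_1},\dots,s_{j_r}\}$ with $j_1<\dots<j_r$, the $J$-regions are $\{1,\dots,j_1\},\{j_1+1,\dots,j_2\},\dots,\{j_r+1,\dots,n\}$. $w\in\mathfrak{S}_n^J$ is $(J,231)$-avoiding if there are no indices $i<j<k$ in pairwise different $J$-regions with $w_k<w_i<w_j$ and $w_i=w_k+1$, and $(J,132)$-avoiding if there are no indices $i<j<k$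 in pairwise different $J$-regions with $w_i<w_k<w_j$ and $w_k=w_i+1$. For $w\in\mathfrak{S}_n^J$, $\Pi_\downarrow^J(w)$ is the unique greatest $(J,231)$-avoiding element of $\mathfrak{S}_n^J$ that is $\le_S w$, and $\Pi_\uparrow^J(w)$ is the unique least $(J,132)$-avoiding element of $\mathfrak{S}_n^J$ that is $\ge_S w$ (both exist). *)

theory Defs
  imports "HOL-Combinatorics.Permutations"
begin

text \<open>Permutations of [n] are functions w :: nat => nat with w permutes {1..n};
  the one-line entry w_i is w i. A subset J of S = {s_1,...,s_(n-1)} is encoded
  by the index set J, a subset of {1..<n} (s_i in J iff i in J).\<close>

definition inv_set :: "nat \<Rightarrow> (nat \<Rightarrow> nat) \<Rightarrow> (nat \<times> nat) set" where
  "inv_set n w = {(i, j). 1 \<le> i \<and> i < j \<and> j \<le> n \<and> w i > w j}"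

definition weak_le :: "nat \<Rightarrow> (nat \<Rightarrow> nat) \<Rightarrow> (nat \<Rightarrow> nat) \<Rightarrow> bool" where
  "weak_le n u v \<longleftrightarrow> inv_set n u \<subseteq> inv_set n v"

definition weak_cover :: "nat \<Rightarrow> (nat \<Rightarrow> nat) \<Rightarrow> (nat \<Rightarrow> nat) \<Rightarrow> bool" where
  "weak_cover n u v \<longleftrightarrow> inv_set n u \<subseteq> inv_set n v \<and>
     (\<exists>i j. inv_set n v - inv_set n u = {(i, j)} \<and> v i = v j + 1)"

definition SJ :: "nat \<Rightarrow> nat set \<Rightarrow> (nat \<Rightarrow> nat) set" where
  "SJ n J = {w. w permutes {1..n} \<and> (\<forall>i\<in>J. w i < w (Suc i))}"

definition same_region :: "nat \<Rightarrow> nat set \<Rightarrow> nat \<Rightarrow> nat \<Rightarrow> bool" where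
  "same_region n J i j \<longleftrightarrow> (\<forall>d\<in>{1..<n} - J. \<not> (min i j \<le> d \<and> d < max i j))"

definition diff_regions :: "nat \<Rightarrow> nat set \<Rightarrow> nat \<Rightarrow> nat \<Rightarrow> nat \<Rightarrow> bool" where
  "diff_regions n J i j k \<longleftrightarrow>
     \<not> same_region n J i j \<and> \<not> same_region n J j k \<and> \<not> same_region n J i k"

definition avoids231 :: "nat \<Rightarrow> nat set \<Rightarrow> (nat \<Rightarrow> nat) \<Rightarrow> bool" where
  "avoids231 n J w \<longleftrightarrow> \<not> (\<exists>i j k. 1 \<le> i \<and> i < j \<and> j < k \<and> k \<le> n \<and>
      diff_regions n J i j k \<and> w k < w i \<and> w i < w j \<and> w i = w k + 1)"

definition avoids132 :: "nat \<Rightarrow> nat set \<Rightarrow> (nat \<Rightarrow> nat) \<Rightarrow> bool" where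
  "avoids132 n J w \<longleftrightarrow> \<not> (\<exists>i j k. 1 \<le> i \<and> i < j \<and> j < k \<and> k \<le> n \<and>
      diff_regions n J i j k \<and> w i < w k \<and> w k < w j \<and> w k = w i + 1)"

definition Pi_down :: "nat \<Rightarrow> nat set \<Rightarrow> (nat \<Rightarrow> nat) \<Rightarrow> (nat \<Rightarrow> nat)" where
  "Pi_down n J w = (THE x. x \<in> SJ n J \<and> avoids231 n J x \<and> weak_le n x w \<and>
      (\<forall>y\<in>SJ n J. avoids231 n J y \<and> weak_le n y w \<longrightarrow> weak_le n y x))"

definition Pi_up :: "nat \<Rightarrow> nat set \<Rightarrow> (nat \<Rightarrow> nat) \<Rightarrow> (nat \<Rightarrow> nat)" where
  "Pi_up n J w = (THE x. x \<in> SJ n J \<and> avoids132 n J x \<and> weak_le n w x \<and>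
      (\<forall>y\<in>SJ n J. avoids132 n J y \<and> weak_le n w y \<longrightarrow> weak_le n x y))"

end

theory Submission
  imports Defs
begin

lemma inv_set_mem: "(p,q) \<in> inv_set n w \<longleftrightarrow> 1 \<le> p \<and> p < q \<and> q \<le> n \<and> w p > w q"
  by (simp add: inv_set_def)

lemma inv_set_sub: "inv_set n w \<subseteq> {1..n} \<times> {1..n}"
  by (auto simp: inv_set_def)

lemma finite_inv_set: "finite (inv_set n w)"
  by (rule finite_subset[OF inv_set_sub]) auto

definition swp :: "(nat \<Rightarrow> nat) \<Rightarrow> nat \<Rightarrow> nat \<Rightarrow> nat \<Rightarrow> nat" where
  "swp w i k p = (if p = i then w k else if p = k then w i else w p)"

lemma swp_permutes:
  assumes "w permutes {1..n}" "i \<in> {1..n}" "k \<in> {1..n}"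
  shows "swp w i k permutes {1..n}"
proof -
  have "swp w i k = w \<circ> Transposition.transpose i k"
    by (auto simp: swp_def fun_eq_iff Transposition.transpose_def)
  then show ?thesis using permutes_compose[OF permutes_swap_id[OF assms(2,3)] assms(1)] by simp
qed

lemma swp_pair:
  assumes w: "w permutes {1..n}" and ik: "i < k" and adj: "w i = w k + 1 \<or> w k = w i + 1"
    and pq: "p < q" "(p,q) \<noteq> (i,k)"
  shows "swp w i k p > swp w i k q \<longleftrightarrow> w p > w q"
proof -
  have inj: "\<And>a b. w a = w b \<longleftrightarrow> a = b" using permutes_inj[OF w] by (simp add: inj_eq)
  show ?thesis using pq ik adj inj[of p i] inj[of p k] inj[of q i] inj[of q k] inj[of p q]
    unfolding swp_def by (auto split: if_splits)
qed

lemma swp_inv1: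
  assumes w: "w permutes {1..n}" and ik: "i < k" and adj: "w i = w k + 1 \<or> w k = w i + 1"
  shows "inv_set n (swp w i k) - {(i,k)} = inv_set n w - {(i,k)}"
  using swp_pair[OF w ik adj] by (auto simp: inv_set_def)

lemma swp_inv2:
  assumes ik: "i < k"
  shows "(i,k) \<in> inv_set n (swp w i k) \<longleftrightarrow> 1 \<le> i \<and> k \<le> n \<and> w i < w k"
  using ik by (auto simp: inv_set_def swp_def)

lemma swp_SJ:
  assumes w: "w \<in> SJ n J" and ik: "1 \<le> i" "i < k" "k \<le> n" "k \<noteq> Suc i"
    and adj: "w i = w k + 1 \<or> w k = w i + 1"
  shows "swp w i k \<in> SJ n J"
proof -
  have wp: "w permutes {1..n}" and asc: "\<And>p. p \<in> J \<Longrightarrow> w p < w (Suc p)" using w by (auto simp: SJ_def)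
  have inj: "\<And>a b. w a = w b \<longleftrightarrow> a = b" using permutes_inj[OF wp] by (simp add: inj_eq)
  have "swp w i k p < swp w i k (Suc p)" if "p \<in> J" for p
  proof -
    have a: "w p < w (Suc p)" using asc[OF that] .
    have n1: "w p \<noteq> w i" if "p \<noteq> i" using inj that by blast
    have n2: "w p \<noteq> w k" if "p \<noteq> k" using inj that by blast
    have n3: "w (Suc p) \<noteq> w i" if "Suc p \<noteq> i" using inj that by blast
    have n4: "w (Suc p) \<noteq> w k" if "Suc p \<noteq> k" using inj that by blast
    consider "p = i" | "p = k" | "Suc p = i" | "Suc p = k" | "p \<noteq> i" "p \<noteq> k" "Suc p \<noteq> i" "Suc p \<noteq> k"
      by blast
    then show ?thesis
    proof cases
      case 1
      then have "Suc p \<noteq> i" "Suc p \<noteq> k" using ik by auto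
      then show ?thesis using 1 a adj n3 n4 ik unfolding swp_def by auto
    next
      case 2
      then have "Suc p \<noteq> i" "Suc p \<noteq> k" "p \<noteq> i" using ik by auto
      then show ?thesis using 2 a adj n3 n4 ik unfolding swp_def by auto
    next
      case 3
      then have "p \<noteq> i" "p \<noteq> k" using ik by auto
      then show ?thesis using 3 a adj n1 n2 ik unfolding swp_def by auto
    next
      case 4
      then have "p \<noteq> i" "p \<noteq> k" "Suc p \<noteq> i" using ik by auto
      then show ?thesis using 4 a adj n1 n2 ik unfolding swp_def by auto
    next
      case 5
      then show ?thesis using a unfolding swp_def by auto
    qed
  qed
  moreover have "swp w i k permutes {1..n}" using swp_permutes[OF wp] ik by auto
  ultimately show ?thesis by (auto simp: SJ_def)
qed

lemma inv_eq_imp_eq: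
  assumes x: "x permutes {1..n}" and y: "y permutes {1..n}" and eq: "inv_set n x = inv_set n y"
  shows "x = y"
proof
  fix p
  show "x p = y p"
  proof (cases "p \<in> {1..n}")
    case False
    then show ?thesis using x y by (simp add: permutes_def)
  next
    case True
    have cnt: "card {q \<in> {1..n}. z q \<le> z p} = z p" if z: "z permutes {1..n}" for z
    proof -
      have injz: "inj_on z {q \<in> {1..n}. z q \<le> z p}" using permutes_inj[OF z] by (auto intro: inj_on_subset)
      have im: "z ` {1..n} = {1..n}" using permutes_image[OF z] .
      have zp: "z p \<in> {1..n}" using True im by auto
      have "z ` {q \<in> {1..n}. z q \<le> z p} = {1..z p}"
      proof
        show "z ` {q \<in> {1..n}. z q \<le> z p} \<subseteq> {1..z p}" using im by auto
        show "{1..z p} \<subseteq> z ` {q \<in> {1..n}. z q \<le> z p}"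
        proof
          fix c assume c: "c \<in> {1..z p}"
          then have "c \<in> z ` {1..n}" using im zp by auto
          then obtain q where "q \<in> {1..n}" "c = z q" by auto
          then show "c \<in> z ` {q \<in> {1..n}. z q \<le> z p}" using c by auto
        qed
      qed
      then show ?thesis using card_image[OF injz] by simp
    qed
    have injx: "\<And>a b. x a = x b \<longleftrightarrow> a = b" using permutes_inj[OF x] by (simp add: inj_eq)
    have injy: "\<And>a b. y a = y b \<longleftrightarrow> a = b" using permutes_inj[OF y] by (simp add: inj_eq)
    have "{q \<in> {1..n}. x q \<le> x p} = {q \<in> {1..n}. y q \<le> y p}"
    proof -
      have "x q \<le> x p \<longleftrightarrow> y q \<le> y p" if q: "q \<in> {1..n}" for q
      proof -
        consider "q < p" | "q = p" | "p < q" by arith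
        then show ?thesis
        proof cases
          case 1
          have "(q,p) \<in> inv_set n x \<longleftrightarrow> (q,p) \<in> inv_set n y" using eq by simp
          then show ?thesis using 1 q True injx[of q p] injy[of q p] by (auto simp: inv_set_def)
        next
          case 3
          have "(p,q) \<in> inv_set n x \<longleftrightarrow> (p,q) \<in> inv_set n y" using eq by simp
          then show ?thesis using 3 q True injx[of q p] injy[of q p] by (auto simp: inv_set_def)
        qed simp
      qed
      then show ?thesis by auto
    qed
    then show ?thesis using cnt[OF x] cnt[OF y] by simp
  qed
qed


lemma diff_regions_mono:
  assumes "diff_regions n J i j k" "i' \<le> i" "k \<le> k'" "i < j" "j < k"
  shows "diff_regions n J i' j k'"
proof -
  from assms(1) obtain d1 where d1: "d1 \<in> {1..<n} - J" "i \<le> d1" "d1 < j"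
    using assms(4) unfolding diff_regions_def same_region_def by (auto simp: min_def max_def split: if_splits)
  from assms(1) obtain d2 where d2: "d2 \<in> {1..<n} - J" "j \<le> d2" "d2 < k"
    using assms(5) unfolding diff_regions_def same_region_def by (auto simp: min_def max_def split: if_splits)
  have e1: "\<exists>d\<in>{1..<n} - J. i' \<le> d \<and> d < j" using d1 assms(2) by (intro bexI[of _ d1]) auto
  have e2: "\<exists>d\<in>{1..<n} - J. j \<le> d \<and> d < k'" using d2 assms(3) by (intro bexI[of _ d2]) auto
  have e3: "\<exists>d\<in>{1..<n} - J. i' \<le> d \<and> d < k'" using d1 assms(2-5) by (intro bexI[of _ d1]) auto
  have o: "i' < j" "j < k'" "i' < k'" using assms(2-5) by auto
  show ?thesis unfolding diff_regions_def same_region_def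
    using e1 e2 e3 o by (auto simp: min_def max_def)
qed

lemma perm_surj:
  assumes "x permutes {1..n}" "c \<in> {1..n}"
  obtains p where "p \<in> {1..n}" "x p = c"
  using permutes_image[OF assms(1)] assms(2) by (metis imageE)

lemma perm_range:
  assumes "x permutes {1..n}" "p \<in> {1..n}"
  shows "x p \<in> {1..n}"
  using permutes_image[OF assms(1)] assms(2) by blast

lemma down_key:
  assumes x: "x permutes {1..n}" and av: "avoids231 n J x"
    and sub: "inv_set n x \<subseteq> W"
    and ijk: "1 \<le> i" "i < j" "j < k" "k \<le> n" "diff_regions n J i j k"
    and ij: "(i,j) \<notin> W"
    and mid: "\<forall>q. i < q \<and> q < k \<longrightarrow> (i,q) \<notin> W \<or> (q,k) \<notin> W"
  shows "(i,k) \<notin> inv_set n x"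
proof
  assume ik: "(i,k) \<in> inv_set n x"
  have inj: "\<And>a b. x a = x b \<longleftrightarrow> a = b" using permutes_inj[OF x] by (simp add: inj_eq)
  have xki: "x k < x i" using ik by (simp add: inv_set_def)
  have "(i,j) \<notin> inv_set n x" using ij sub by blast
  then have xij: "x i < x j" using ijk inj[of i j] by (auto simp: inv_set_def)
  have nomid: "\<not> (x k < x q \<and> x q < x i)" if "i < q" "q < k" for q
  proof -
    from mid that have "(i,q) \<notin> W \<or> (q,k) \<notin> W" by blast
    then have "(i,q) \<notin> inv_set n x \<or> (q,k) \<notin> inv_set n x" using sub by blast
    then show ?thesis using that ijk by (auto simp: inv_set_def)
  qed
  define S where "S = {c. x k \<le> c \<and> c < x i \<and> (\<exists>p. k \<le> p \<and> p \<le> n \<and> x p = c)}"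
  have finS: "finite S" unfolding S_def by (rule finite_subset[of _ "{..<x i}"]) auto
  have "x k \<in> S" unfolding S_def using xki ijk by auto
  then have neS: "S \<noteq> {}" by blast
  define c where "c = Max S"
  have cS: "c \<in> S" unfolding c_def using Max_in[OF finS neS] .
  have cmax: "\<And>c'. c' \<in> S \<Longrightarrow> c' \<le> c" unfolding c_def using Max_ge[OF finS] by blast
  from cS obtain p where p: "k \<le> p" "p \<le> n" "x p = c" and c1: "x k \<le> c" "c < x i"
    unfolding S_def by blast
  have xi_range: "x i \<in> {1..n}" using perm_range[OF x] ijk by auto
  then have "Suc c \<in> {1..n}" using c1 by auto
  then obtain p' where p': "p' \<in> {1..n}" "x p' = Suc c" using perm_surj[OF x] by blast
  have p'i: "p' \<le> i"
  proof (cases "Suc c = x i")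
    case True
    then show ?thesis using p' inj by auto
  next
    case False
    then have lt: "Suc c < x i" using c1 by auto
    have "p' \<noteq> i" using lt p' by auto
    moreover have "\<not> (i < p' \<and> p' < k)" using nomid[of p'] lt p' c1 by auto
    moreover have "\<not> (k \<le> p')"
    proof
      assume "k \<le> p'"
      then have "Suc c \<in> S" unfolding S_def using p' lt c1 by auto
      then show False using cmax by fastforce
    qed
    ultimately show ?thesis by auto
  qed
  have "1 \<le> p' \<and> p' < j \<and> j < p \<and> p \<le> n \<and> diff_regions n J p' j p \<and> x p < x p' \<and> x p' < x j \<and> x p' = x p + 1"
    using p p' p'i ijk xij c1 diff_regions_mono[OF ijk(5) p'i p(1) ijk(2,3)] by auto
  then show False using av unfolding avoids231_def by blast
qed

lemma up_key:
  assumes x: "x permutes {1..n}" and av: "avoids132 n J x"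
    and sub: "W \<subseteq> inv_set n x"
    and ijk: "1 \<le> i" "i < j" "j < k" "k \<le> n" "diff_regions n J i j k"
    and jk: "(j,k) \<in> W"
    and mid: "\<forall>q. i < q \<and> q < k \<longrightarrow> (i,q) \<in> W \<or> (q,k) \<in> W"
  shows "(i,k) \<in> inv_set n x"
proof (rule ccontr)
  assume ik: "(i,k) \<notin> inv_set n x"
  have inj: "\<And>a b. x a = x b \<longleftrightarrow> a = b" using permutes_inj[OF x] by (simp add: inj_eq)
  have xik: "x i < x k" using ik ijk inj[of i k] by (auto simp: inv_set_def)
  have "(j,k) \<in> inv_set n x" using jk sub by blast
  then have xkj: "x k < x j" by (auto simp: inv_set_def)
  have nomid: "\<not> (x i < x q \<and> x q < x k)" if "i < q" "q < k" for q
  proof -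
    from mid that have "(i,q) \<in> W \<or> (q,k) \<in> W" by blast
    then have "(i,q) \<in> inv_set n x \<or> (q,k) \<in> inv_set n x" using sub by blast
    then show ?thesis using that ijk by (auto simp: inv_set_def)
  qed
  define S where "S = {c. x i \<le> c \<and> c < x k \<and> (\<exists>p. 1 \<le> p \<and> p \<le> i \<and> x p = c)}"
  have finS: "finite S" unfolding S_def by (rule finite_subset[of _ "{..<x k}"]) auto
  have "x i \<in> S" unfolding S_def using xik ijk by auto
  then have neS: "S \<noteq> {}" by blast
  define c where "c = Max S"
  have cS: "c \<in> S" unfolding c_def using Max_in[OF finS neS] .
  have cmax: "\<And>c'. c' \<in> S \<Longrightarrow> c' \<le> c" unfolding c_def using Max_ge[OF finS] by blast
  from cS obtain p where p: "1 \<le> p" "p \<le> i" "x p = c" and c1: "x i \<le> c" "c < x k"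
    unfolding S_def by blast
  have xk_range: "x k \<in> {1..n}" using perm_range[OF x] ijk by auto
  then have "Suc c \<in> {1..n}" using c1 by auto
  then obtain p' where p': "p' \<in> {1..n}" "x p' = Suc c" using perm_surj[OF x] by blast
  have p'k: "k \<le> p'"
  proof (cases "Suc c = x k")
    case True
    then show ?thesis using p' inj by auto
  next
    case False
    then have lt: "Suc c < x k" using c1 by auto
    have "p' \<noteq> k" using lt p' by auto
    moreover have "\<not> (i < p' \<and> p' < k)" using nomid[of p'] lt p' c1 by auto
    moreover have "\<not> (p' \<le> i)"
    proof
      assume "p' \<le> i"
      then have "Suc c \<in> S" unfolding S_def using p' lt c1 by auto
      then show False using cmax by fastforce
    qed
    ultimately show ?thesis by auto
  qed
  have "1 \<le> p \<and> p < j \<and> j < p' \<and> p' \<le> n \<and> diff_regions n J p j p' \<and> x p < x p' \<and> x p' < x j \<and> x p' = x p + 1"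
    using p p' p'k ijk xkj c1 diff_regions_mono[OF ijk(5) p(2) p'k ijk(2,3)] by auto
  then show False using av unfolding avoids132_def by blast
qed


definition Qd :: "nat \<Rightarrow> nat set \<Rightarrow> (nat \<Rightarrow> nat) \<Rightarrow> nat \<Rightarrow> nat \<Rightarrow> bool" where
  "Qd n J w i k \<longleftrightarrow> (i,k) \<in> inv_set n w \<and>
     (\<forall>j. i < j \<and> j < k \<and> diff_regions n J i j k \<longrightarrow> (j,k) \<notin> inv_set n w)"

definition Qu :: "nat \<Rightarrow> nat set \<Rightarrow> (nat \<Rightarrow> nat) \<Rightarrow> nat \<Rightarrow> nat \<Rightarrow> bool" where
  "Qu n J w i k \<longleftrightarrow> (i,k) \<notin> inv_set n w \<and>
     (\<forall>j. i < j \<and> j < k \<and> diff_regions n J i j k \<longrightarrow> (i,j) \<in> inv_set n w)"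

lemma down_exists:
  "w \<in> SJ n J \<Longrightarrow> \<exists>z. z \<in> SJ n J \<and> avoids231 n J z \<and> inv_set n z \<subseteq> inv_set n w \<and>
     (\<forall>y\<in>SJ n J. avoids231 n J y \<and> inv_set n y \<subseteq> inv_set n w \<longrightarrow> inv_set n y \<subseteq> inv_set n z) \<and>
     (\<forall>i k. Qd n J w i k \<longrightarrow> (i,k) \<in> inv_set n z)"
proof (induction "card (inv_set n w)" arbitrary: w rule: less_induct)
  case less
  show ?case
  proof (cases "avoids231 n J w")
    case True
    then show ?thesis using less.prems by (intro exI[of _ w]) (auto simp: Qd_def)
  next
    case False
    then obtain i j k where ijk: "1 \<le> i" "i < j" "j < k" "k \<le> n" "diff_regions n J i j k"
      and val: "w k < w i" "w i < w j" "w i = w k + 1"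
      unfolding avoids231_def by blast
    have wp: "w permutes {1..n}" using less.prems by (simp add: SJ_def)
    have inj: "\<And>a b. w a = w b \<longleftrightarrow> a = b" using permutes_inj[OF wp] by (simp add: inj_eq)
    define w' where "w' = swp w i k"
    have adj: "w i = w k + 1 \<or> w k = w i + 1" using val by simp
    have ik: "i < k" using ijk by simp
    have w'SJ: "w' \<in> SJ n J" unfolding w'_def using swp_SJ[OF less.prems ijk(1) ik ijk(4) _ adj] ijk by simp
    have ikw: "(i,k) \<in> inv_set n w" using ijk val by (simp add: inv_set_def)
    have ikw': "(i,k) \<notin> inv_set n w'" unfolding w'_def using swp_inv2[OF ik, of n w] val by simp
    have invw': "inv_set n w' = inv_set n w - {(i,k)}"
      using swp_inv1[OF wp ik adj] ikw' unfolding w'_def by blast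
    have lt: "card (inv_set n w') < card (inv_set n w)"
      using invw' ikw by (metis card_Diff1_less finite_inv_set)
    obtain z where z: "z \<in> SJ n J" "avoids231 n J z" "inv_set n z \<subseteq> inv_set n w'"
      and zg: "\<forall>y\<in>SJ n J. avoids231 n J y \<and> inv_set n y \<subseteq> inv_set n w' \<longrightarrow> inv_set n y \<subseteq> inv_set n z"
      and zq: "\<forall>i k. Qd n J w' i k \<longrightarrow> (i,k) \<in> inv_set n z"
      using less.hyps[OF lt w'SJ] by blast
    have ij: "(i,j) \<notin> inv_set n w" using val by (simp add: inv_set_def)
    have mid: "\<forall>q. i < q \<and> q < k \<longrightarrow> (i,q) \<notin> inv_set n w \<or> (q,k) \<notin> inv_set n w"
    proof (intro allI impI)
      fix q assume q: "i < q \<and> q < k"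
      then have "w q \<noteq> w i" "w q \<noteq> w k" using inj by auto
      then have "w q > w i \<or> w q < w k" using val by auto
      then show "(i,q) \<notin> inv_set n w \<or> (q,k) \<notin> inv_set n w" by (auto simp: inv_set_def)
    qed
    show ?thesis
    proof (intro exI[of _ z] conjI)
      show "z \<in> SJ n J" "avoids231 n J z" by (fact z)+
      show "inv_set n z \<subseteq> inv_set n w" using z(3) invw' by blast
      show "\<forall>y\<in>SJ n J. avoids231 n J y \<and> inv_set n y \<subseteq> inv_set n w \<longrightarrow> inv_set n y \<subseteq> inv_set n z"
      proof (intro ballI impI)
        fix y assume y: "y \<in> SJ n J" "avoids231 n J y \<and> inv_set n y \<subseteq> inv_set n w"
        have yp: "y permutes {1..n}" using y(1) by (simp add: SJ_def)
        have "(i,k) \<notin> inv_set n y"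
          using down_key[OF yp _ _ ijk ij mid] y(2) by blast
        then have "inv_set n y \<subseteq> inv_set n w'" using y(2) invw' by blast
        then show "inv_set n y \<subseteq> inv_set n z" using zg y by blast
      qed
      show "\<forall>i k. Qd n J w i k \<longrightarrow> (i,k) \<in> inv_set n z"
      proof (intro allI impI)
        fix i0 k0 assume q: "Qd n J w i0 k0"
        have "(i0,k0) \<noteq> (i,k)"
        proof
          assume e: "(i0,k0) = (i,k)"
          have "(j,k) \<in> inv_set n w" using val ijk by (simp add: inv_set_def)
          then show False using q e ijk unfolding Qd_def by blast
        qed
        then have "Qd n J w' i0 k0" using q invw' unfolding Qd_def by blast
        then show "(i0,k0) \<in> inv_set n z" using zq by blast
      qed
    qed
  qed
qed

definition allpairs :: "nat \<Rightarrow> (nat \<times> nat) set" where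
  "allpairs n = {1..n} \<times> {1..n}"

lemma up_exists:
  "w \<in> SJ n J \<Longrightarrow> \<exists>z. z \<in> SJ n J \<and> avoids132 n J z \<and> inv_set n w \<subseteq> inv_set n z \<and>
     (\<forall>y\<in>SJ n J. avoids132 n J y \<and> inv_set n w \<subseteq> inv_set n y \<longrightarrow> inv_set n z \<subseteq> inv_set n y) \<and>
     (\<forall>i k. Qu n J w i k \<longrightarrow> (i,k) \<notin> inv_set n z)"
proof (induction "card (allpairs n - inv_set n w)" arbitrary: w rule: less_induct)
  case less
  show ?case
  proof (cases "avoids132 n J w")
    case True
    then show ?thesis using less.prems by (intro exI[of _ w]) (auto simp: Qu_def)
  next
    case False
    then obtain i j k where ijk: "1 \<le> i" "i < j" "j < k" "k \<le> n" "diff_regions n J i j k"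
      and val: "w i < w k" "w k < w j" "w k = w i + 1"
      unfolding avoids132_def by blast
    have wp: "w permutes {1..n}" using less.prems by (simp add: SJ_def)
    have inj: "\<And>a b. w a = w b \<longleftrightarrow> a = b" using permutes_inj[OF wp] by (simp add: inj_eq)
    define w' where "w' = swp w i k"
    have adj: "w i = w k + 1 \<or> w k = w i + 1" using val by simp
    have ik: "i < k" using ijk by simp
    have w'SJ: "w' \<in> SJ n J" unfolding w'_def using swp_SJ[OF less.prems ijk(1) ik ijk(4) _ adj] ijk by simp
    have ikw: "(i,k) \<notin> inv_set n w" using ijk val by (simp add: inv_set_def)
    have ikw': "(i,k) \<in> inv_set n w'" unfolding w'_def using swp_inv2[OF ik, of n w] val ijk by simp
    have invw': "inv_set n w' = insert (i,k) (inv_set n w)"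
      using swp_inv1[OF wp ik adj] ikw' unfolding w'_def by blast
    have ikA: "(i,k) \<in> allpairs n" using ijk by (auto simp: allpairs_def)
    have lt: "card (allpairs n - inv_set n w') < card (allpairs n - inv_set n w)"
    proof (rule psubset_card_mono)
      show "finite (allpairs n - inv_set n w)" by (simp add: allpairs_def)
      show "allpairs n - inv_set n w' \<subset> allpairs n - inv_set n w"
        using invw' ikw ikA by blast
    qed
    obtain z where z: "z \<in> SJ n J" "avoids132 n J z" "inv_set n w' \<subseteq> inv_set n z"
      and zg: "\<forall>y\<in>SJ n J. avoids132 n J y \<and> inv_set n w' \<subseteq> inv_set n y \<longrightarrow> inv_set n z \<subseteq> inv_set n y"
      and zq: "\<forall>i k. Qu n J w' i k \<longrightarrow> (i,k) \<notin> inv_set n z"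
      using less.hyps[OF lt w'SJ] by blast
    have jk: "(j,k) \<in> inv_set n w" using val ijk by (simp add: inv_set_def)
    have mid: "\<forall>q. i < q \<and> q < k \<longrightarrow> (i,q) \<in> inv_set n w \<or> (q,k) \<in> inv_set n w"
    proof (intro allI impI)
      fix q assume q: "i < q \<and> q < k"
      then have "w q \<noteq> w i" "w q \<noteq> w k" using inj by auto
      then have "w q < w i \<or> w q > w k" using val by auto
      then show "(i,q) \<in> inv_set n w \<or> (q,k) \<in> inv_set n w" using q ijk by (auto simp: inv_set_def)
    qed
    show ?thesis
    proof (intro exI[of _ z] conjI)
      show "z \<in> SJ n J" "avoids132 n J z" by (fact z)+
      show "inv_set n w \<subseteq> inv_set n z" using z(3) invw' by blast
      show "\<forall>y\<in>SJ n J. avoids132 n J y \<and> inv_set n w \<subseteq> inv_set n y \<longrightarrow> inv_set n z \<subseteq> inv_set n y"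
      proof (intro ballI impI)
        fix y assume y: "y \<in> SJ n J" "avoids132 n J y \<and> inv_set n w \<subseteq> inv_set n y"
        have yp: "y permutes {1..n}" using y(1) by (simp add: SJ_def)
        have "(i,k) \<in> inv_set n y"
          using up_key[OF yp _ _ ijk jk mid] y(2) by blast
        then have "inv_set n w' \<subseteq> inv_set n y" using y(2) invw' by auto
        then show "inv_set n z \<subseteq> inv_set n y" using zg y by blast
      qed
      show "\<forall>i k. Qu n J w i k \<longrightarrow> (i,k) \<notin> inv_set n z"
      proof (intro allI impI)
        fix i0 k0 assume q: "Qu n J w i0 k0"
        have "(i0,k0) \<noteq> (i,k)"
        proof
          assume e: "(i0,k0) = (i,k)"
          have "(i,j) \<notin> inv_set n w" using val ijk by (simp add: inv_set_def)
          then show False using q e ijk unfolding Qu_def by blast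
        qed
        then have "Qu n J w' i0 k0" using q invw' unfolding Qu_def by blast
        then show "(i0,k0) \<notin> inv_set n z" using zq by blast
      qed
    qed
  qed
qed

lemma Pi_down_eq:
  assumes "z \<in> SJ n J" "avoids231 n J z" "inv_set n z \<subseteq> inv_set n w"
    "\<forall>y\<in>SJ n J. avoids231 n J y \<and> inv_set n y \<subseteq> inv_set n w \<longrightarrow> inv_set n y \<subseteq> inv_set n z"
  shows "Pi_down n J w = z"
  unfolding Pi_down_def weak_le_def
proof (rule the_equality)
  show "z \<in> SJ n J \<and> avoids231 n J z \<and> inv_set n z \<subseteq> inv_set n w \<and>
    (\<forall>y\<in>SJ n J. avoids231 n J y \<and> inv_set n y \<subseteq> inv_set n w \<longrightarrow> inv_set n y \<subseteq> inv_set n z)"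
    using assms by blast
  fix x assume x: "x \<in> SJ n J \<and> avoids231 n J x \<and> inv_set n x \<subseteq> inv_set n w \<and>
    (\<forall>y\<in>SJ n J. avoids231 n J y \<and> inv_set n y \<subseteq> inv_set n w \<longrightarrow> inv_set n y \<subseteq> inv_set n x)"
  then have "inv_set n x = inv_set n z" using assms by blast
  moreover have "x permutes {1..n}" "z permutes {1..n}" using x assms(1) by (auto simp: SJ_def)
  ultimately show "x = z" using inv_eq_imp_eq by blast
qed

lemma Pi_up_eq:
  assumes "z \<in> SJ n J" "avoids132 n J z" "inv_set n w \<subseteq> inv_set n z"
    "\<forall>y\<in>SJ n J. avoids132 n J y \<and> inv_set n w \<subseteq> inv_set n y \<longrightarrow> inv_set n z \<subseteq> inv_set n y"
  shows "Pi_up n J w = z"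
  unfolding Pi_up_def weak_le_def
proof (rule the_equality)
  show "z \<in> SJ n J \<and> avoids132 n J z \<and> inv_set n w \<subseteq> inv_set n z \<and>
    (\<forall>y\<in>SJ n J. avoids132 n J y \<and> inv_set n w \<subseteq> inv_set n y \<longrightarrow> inv_set n z \<subseteq> inv_set n y)"
    using assms by blast
  fix x assume x: "x \<in> SJ n J \<and> avoids132 n J x \<and> inv_set n w \<subseteq> inv_set n x \<and>
    (\<forall>y\<in>SJ n J. avoids132 n J y \<and> inv_set n w \<subseteq> inv_set n y \<longrightarrow> inv_set n x \<subseteq> inv_set n y)"
  then have "inv_set n x = inv_set n z" using assms by blast
  moreover have "x permutes {1..n}" "z permutes {1..n}" using x assms(1) by (auto simp: SJ_def)
  ultimately show "x = z" using inv_eq_imp_eq by blast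
qed


theorem lemma3p16:
  fixes n :: nat and J :: "nat set" and u v :: "nat \<Rightarrow> nat"
  assumes "J \<subseteq> {1..<n}"
    and "u \<in> SJ n J" and "v \<in> SJ n J"
    and "weak_cover n u v"
  shows "((\<exists>i j k. 1 \<le> i \<and> i < j \<and> j < k \<and> k \<le> n \<and> diff_regions n J i j k \<and>
              v k < v i \<and> v i < v j \<and> v i = v k + 1 \<and>
              inv_set n v - inv_set n u = {(i, k)})
           \<longleftrightarrow> Pi_down n J u = Pi_down n J v)
       \<and> (Pi_down n J u = Pi_down n J v \<longleftrightarrow> Pi_up n J u = Pi_up n J v)"
proof -
  note uS = assms(2) and vS = assms(3)
  have vp: "v permutes {1..n}" using vS by (simp add: SJ_def)
  have inj: "\<And>a b. v a = v b \<longleftrightarrow> a = b" using permutes_inj[OF vp] by (simp add: inj_eq)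
  obtain i k where sub: "inv_set n u \<subseteq> inv_set n v" and D: "inv_set n v - inv_set n u = {(i,k)}"
    and adj: "v i = v k + 1"
    using assms(4) unfolding weak_cover_def by blast
  have ikv: "(i,k) \<in> inv_set n v" using D by blast
  then have ik: "1 \<le> i" "i < k" "k \<le> n" "v k < v i" by (auto simp: inv_set_def)
  have ikv_u: "(i,k) \<notin> inv_set n u" using D by blast
  have invu: "inv_set n u = inv_set n v - {(i,k)}" using sub D by blast
  define C where "C = (\<exists>j. i < j \<and> j < k \<and> diff_regions n J i j k \<and> v i < v j)"
  have stmt: "(\<exists>i j k. 1 \<le> i \<and> i < j \<and> j < k \<and> k \<le> n \<and> diff_regions n J i j k \<and>
              v k < v i \<and> v i < v j \<and> v i = v k + 1 \<and>
              inv_set n v - inv_set n u = {(i, k)}) \<longleftrightarrow> C"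
  proof
    assume "\<exists>i j k. 1 \<le> i \<and> i < j \<and> j < k \<and> k \<le> n \<and> diff_regions n J i j k \<and>
              v k < v i \<and> v i < v j \<and> v i = v k + 1 \<and>
              inv_set n v - inv_set n u = {(i, k)}"
    then obtain i' j k' where h: "i' < j" "j < k'" "diff_regions n J i' j k'" "v i' < v j"
      "inv_set n v - inv_set n u = {(i', k')}" by blast
    then have "(i',k') = (i,k)" using D by simp
    then show C using h unfolding C_def by auto
  next
    assume C
    then obtain j where "i < j" "j < k" "diff_regions n J i j k" "v i < v j" unfolding C_def by blast
    then show "\<exists>i j k. 1 \<le> i \<and> i < j \<and> j < k \<and> k \<le> n \<and> diff_regions n J i j k \<and>
              v k < v i \<and> v i < v j \<and> v i = v k + 1 \<and>
              inv_set n v - inv_set n u = {(i, k)}"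
      using ik adj D by blast
  qed
  obtain zu where zu: "zu \<in> SJ n J" "avoids231 n J zu" "inv_set n zu \<subseteq> inv_set n u"
    "\<forall>y\<in>SJ n J. avoids231 n J y \<and> inv_set n y \<subseteq> inv_set n u \<longrightarrow> inv_set n y \<subseteq> inv_set n zu"
    and zuq: "\<forall>i k. Qd n J u i k \<longrightarrow> (i,k) \<in> inv_set n zu"
    using down_exists[OF uS] by blast
  obtain zv where zv: "zv \<in> SJ n J" "avoids231 n J zv" "inv_set n zv \<subseteq> inv_set n v"
    "\<forall>y\<in>SJ n J. avoids231 n J y \<and> inv_set n y \<subseteq> inv_set n v \<longrightarrow> inv_set n y \<subseteq> inv_set n zv"
    and zvq: "\<forall>i k. Qd n J v i k \<longrightarrow> (i,k) \<in> inv_set n zv"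
    using down_exists[OF vS] by blast
  obtain yu where yu: "yu \<in> SJ n J" "avoids132 n J yu" "inv_set n u \<subseteq> inv_set n yu"
    "\<forall>y\<in>SJ n J. avoids132 n J y \<and> inv_set n u \<subseteq> inv_set n y \<longrightarrow> inv_set n yu \<subseteq> inv_set n y"
    and yuq: "\<forall>i k. Qu n J u i k \<longrightarrow> (i,k) \<notin> inv_set n yu"
    using up_exists[OF uS] by blast
  obtain yv where yv: "yv \<in> SJ n J" "avoids132 n J yv" "inv_set n v \<subseteq> inv_set n yv"
    "\<forall>y\<in>SJ n J. avoids132 n J y \<and> inv_set n v \<subseteq> inv_set n y \<longrightarrow> inv_set n yv \<subseteq> inv_set n y"
    and yvq: "\<forall>i k. Qu n J v i k \<longrightarrow> (i,k) \<notin> inv_set n yv"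
    using up_exists[OF vS] by blast
  have PDu: "Pi_down n J u = zu" using Pi_down_eq[OF zu] .
  have PDv: "Pi_down n J v = zv" using Pi_down_eq[OF zv] .
  have PUu: "Pi_up n J u = yu" using Pi_up_eq[OF yu] .
  have PUv: "Pi_up n J v = yv" using Pi_up_eq[OF yv] .
  show ?thesis
  proof (cases C)
    case True
    then obtain j where j: "i < j" "j < k" "diff_regions n J i j k" "v i < v j" unfolding C_def by blast
    have ijk: "1 \<le> i" "i < j" "j < k" "k \<le> n" "diff_regions n J i j k" using j ik by auto
    have eqd: "Pi_down n J u = Pi_down n J v"
    proof -
      have zvp: "zv permutes {1..n}" using zv(1) by (simp add: SJ_def)
      have ij: "(i,j) \<notin> inv_set n v" using j by (simp add: inv_set_def)
      have mid: "\<forall>q. i < q \<and> q < k \<longrightarrow> (i,q) \<notin> inv_set n v \<or> (q,k) \<notin> inv_set n v"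
      proof (intro allI impI)
        fix q assume q: "i < q \<and> q < k"
        then have "v q \<noteq> v i" "v q \<noteq> v k" using inj by auto
        then have "v q > v i \<or> v q < v k" using adj by auto
        then show "(i,q) \<notin> inv_set n v \<or> (q,k) \<notin> inv_set n v" by (auto simp: inv_set_def)
      qed
      have "(i,k) \<notin> inv_set n zv" using down_key[OF zvp zv(2) zv(3) ijk ij mid] .
      then have z1: "inv_set n zv \<subseteq> inv_set n u" using zv(3) invu by blast
      have z2: "\<forall>y\<in>SJ n J. avoids231 n J y \<and> inv_set n y \<subseteq> inv_set n u \<longrightarrow> inv_set n y \<subseteq> inv_set n zv"
        using zv(4) sub by blast
      show ?thesis using Pi_down_eq[OF zv(1,2) z1 z2] PDv by simp
    qed
    have equ: "Pi_up n J u = Pi_up n J v"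
    proof -
      have yup: "yu permutes {1..n}" using yu(1) by (simp add: SJ_def)
      have "(j,k) \<in> inv_set n v" using j ijk ik by (simp add: inv_set_def)
      then have jk: "(j,k) \<in> inv_set n u" using invu j by auto
      have mid: "\<forall>q. i < q \<and> q < k \<longrightarrow> (i,q) \<in> inv_set n u \<or> (q,k) \<in> inv_set n u"
      proof (intro allI impI)
        fix q assume q: "i < q \<and> q < k"
        then have "v q \<noteq> v i" "v q \<noteq> v k" using inj by auto
        then have "v q > v i \<or> v q < v k" using adj by auto
        then have "(i,q) \<in> inv_set n v \<or> (q,k) \<in> inv_set n v" using q ik by (auto simp: inv_set_def)
        then show "(i,q) \<in> inv_set n u \<or> (q,k) \<in> inv_set n u" using q invu by auto
      qed
      have "(i,k) \<in> inv_set n yu" using up_key[OF yup yu(2) yu(3) ijk jk mid] .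
      then have z1: "inv_set n v \<subseteq> inv_set n yu" using yu(3) invu by blast
      have z2: "\<forall>y\<in>SJ n J. avoids132 n J y \<and> inv_set n v \<subseteq> inv_set n y \<longrightarrow> inv_set n yu \<subseteq> inv_set n y"
        using yu(4) sub by blast
      show ?thesis using Pi_up_eq[OF yu(1,2) z1 z2] PUu by simp
    qed
    show ?thesis using stmt True eqd equ by simp
  next
    case False
    have nj: "\<And>j. i < j \<Longrightarrow> j < k \<Longrightarrow> diff_regions n J i j k \<Longrightarrow> v j < v k"
    proof -
      fix j assume a: "i < j" "j < k" "diff_regions n J i j k"
      then have "\<not> v i < v j" using False unfolding C_def by blast
      moreover have "v j \<noteq> v i" "v j \<noteq> v k" using a inj by auto
      ultimately show "v j < v k" using adj by auto
    qed
    have "\<forall>j. i < j \<and> j < k \<and> diff_regions n J i j k \<longrightarrow> (j,k) \<notin> inv_set n v"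
    proof (intro allI impI)
      fix j assume a: "i < j \<and> j < k \<and> diff_regions n J i j k"
      then have "v j < v k" using nj by blast
      then show "(j,k) \<notin> inv_set n v" by (simp add: inv_set_def)
    qed
    then have "Qd n J v i k" unfolding Qd_def using ikv by blast
    then have "(i,k) \<in> inv_set n zv" using zvq by blast
    then have nd: "Pi_down n J u \<noteq> Pi_down n J v" using PDu PDv zu(3) ikv_u by auto
    have "\<forall>j. i < j \<and> j < k \<and> diff_regions n J i j k \<longrightarrow> (i,j) \<in> inv_set n u"
    proof (intro allI impI)
      fix j assume a: "i < j \<and> j < k \<and> diff_regions n J i j k"
      then have "v j < v k" using nj by blast
      then have "(i,j) \<in> inv_set n v" using a ik by (simp add: inv_set_def)
      then show "(i,j) \<in> inv_set n u" using invu a by auto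
    qed
    then have "Qu n J u i k" unfolding Qu_def using ikv_u by blast
    then have "(i,k) \<notin> inv_set n yu" using yuq by blast
    then have nu: "Pi_up n J u \<noteq> Pi_up n J v" using PUu PUv yv(3) ikv by auto
    show ?thesis using stmt False nd nu by simp
  qed
qed

end
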